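(* Let $n\in\mathbb{N}_0$ and $\alpha>0$. For $u,v$ in the open unit disk $\mathbb{D}=\{u\in\mathbb{C}:|u|<1\}$ with $u\neq v$ define $$H_n^\alpha(u,v)=\frac{|u|^{2n}\,|1-\overline{u}v|^{2(n+\alpha+1)}}{|u-v|^{2n}\,(1-|v|^2)^{\alpha+1}}.$$ Let $0<R<1$, let $v\in(0,1)$ be a positive real number with $v<R$, and let $u=|u|e^{-i\varphi}$ with $\varphi\in\mathbb{R}$ and $R\le |u|<1$. If $|\varphi|\le 1-vR$, then $$H_n^\alpha(u,v)\le 2^{n+\alpha+1}\frac{(1-vR)^{2n+\alpha+1}}{(1-v/R)^{2n}}.$$
   Context: Here $\mathbb{N}_0=\{0,1,2,\dots\}$; for $n=0$ the factors with exponent $2n$ are equal to $1$. *)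

theory Defs
  imports "HOL-Analysis.Analysis"
begin

definition H :: "nat \<Rightarrow> real \<Rightarrow> complex \<Rightarrow> complex \<Rightarrow> real" where
  "H n \<alpha> u v =
     (cmod u ^ (2*n) * cmod (1 - cnj u * v) powr (2 * (real n + \<alpha> + 1)))
     / (cmod (u - v) ^ (2*n) * (1 - cmod v ^ 2) powr (\<alpha> + 1))"

end

theory Submission
  imports Defs
begin

lemma one_minus_cos_le: "1 - cos (x::real) \<le> x^2 / 2"
proof -
  have "cos x = 1 - 2 * sin (x/2) ^ 2" using cos_double_sin[of "x/2"] by simp
  moreover have "sin (x/2) ^ 2 \<le> (x/2)^2"
    using abs_sin_x_le_abs_x[of "x/2"] by (metis abs_ge_zero power2_abs power_mono)
  ultimately show ?thesis by (simp add: power_divide)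
qed

lemma sq_powr: "(x::real) \<ge> 0 \<Longrightarrow> (x^2) powr a = x powr (2 * a)"
proof (cases "x = 0")
  case False
  assume "x \<ge> 0"
  hence "x > 0" using False by simp
  hence "x^2 = x powr 2" using powr_realpow[of x 2] by simp
  thus ?thesis by (simp add: powr_powr)
qed simp

theorem lemma1:
  fixes n :: nat and \<alpha> R v \<phi> :: real and u :: complex
  assumes "\<alpha> > 0"
    and "0 < R" "R < 1"
    and "0 < v" "v < 1" "v < R"
    and "u = complex_of_real (cmod u) * exp (- \<i> * complex_of_real \<phi>)"
    and "R \<le> cmod u" "cmod u < 1"
    and "\<bar>\<phi>\<bar> \<le> 1 - v * R"
  shows "H n \<alpha> u (complex_of_real v)
    \<le> 2 powr (real n + \<alpha> + 1) * (1 - v * R) powr (real (2 * n) + \<alpha> + 1)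
       / (1 - v / R) ^ (2 * n)"
proof -
  define r where "r = cmod u"
  have r: "R \<le> r" "r < 1" using assms r_def by auto
  have ue: "u = Complex (r * cos \<phi>) (- r * sin \<phi>)"
    using assms(7) unfolding r_def[symmetric]
    by (simp add: complex_eq_iff exp_Euler cos_of_real sin_of_real Re_exp Im_exp)
  have ssq: "sin \<phi> * sin \<phi> = 1 - cos \<phi> * cos \<phi>" using sin_cos_squared_add[of \<phi>] by (simp add: power2_eq_square)
  define Q where "Q = cmod (1 - cnj u * complex_of_real v) ^ 2"
  have Qe: "Q = 1 - 2 * r * v * cos \<phi> + r^2 * v^2"
  proof -
    have "Q = (1 - r * v * cos \<phi>)^2 + (r * v * sin \<phi>)^2"
      unfolding Q_def ue by (simp add: cmod_def mult_ac)
    also have "\<dots> = 1 - 2 * r * v * cos \<phi> + r^2 * v^2"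
      using sin_cos_squared_add[of \<phi>] by (simp add: power2_eq_square algebra_simps ssq)
    finally show ?thesis .
  qed
  have D2: "cmod (u - complex_of_real v) ^ 2 = r^2 - 2 * r * v * cos \<phi> + v^2"
  proof -
    have "cmod (u - complex_of_real v) ^ 2 = (r * cos \<phi> - v)^2 + (r * sin \<phi>)^2"
      unfolding ue by (simp add: cmod_def mult_ac)
    also have "\<dots> = r^2 - 2 * r * v * cos \<phi> + v^2"
      using sin_cos_squared_add[of \<phi>] by (simp add: power2_eq_square algebra_simps ssq)
    finally show ?thesis .
  qed
  have vpos: "0 < 1 - v * R" using mult_strict_mono[of v 1 R 1] assms by simp
  have rv1: "0 < r * v" using r assms by simp
  have rv2: "r * v < 1" using mult_strict_mono[of r 1 v 1] r assms by simp
  have rv3: "v * R \<le> r * v" using mult_left_mono[of R r v] r assms by (simp add: mult.commute)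
  note rv = rv1 rv2 rv3
  have cosb: "1 - cos \<phi> \<le> (1 - v * R)^2 / 2"
  proof -
    have "\<phi>^2 \<le> (1 - v * R)^2" using assms(10) by (metis abs_ge_zero power2_abs power_mono)
    thus ?thesis using one_minus_cos_le[of \<phi>] by linarith
  qed
  have QP: "Q \<le> 2 * (1 - v * R)^2"
  proof -
    have "Q = (1 - r * v)^2 + 2 * (r * v) * (1 - cos \<phi>)" unfolding Qe by (simp add: power2_eq_square algebra_simps)
    also have "\<dots> \<le> (1 - v * R)^2 + 2 * 1 * ((1 - v * R)^2/2)"
    proof (rule add_mono)
      show "(1 - r * v)^2 \<le> (1 - v * R)^2" using rv by (intro power_mono; linarith)
      show "2 * (r * v) * (1 - cos \<phi>) \<le> 2 * 1 * ((1 - v * R)^2/2)"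
        using rv cosb cos_le_one[of \<phi>] by (intro mult_mono; simp)
    qed
    finally show ?thesis by simp
  qed
  have Qpos: "0 \<le> Q" unfolding Q_def by simp
  have dist: "r - v \<le> cmod (u - complex_of_real v)"
  proof -
    have "(r - v)^2 \<le> cmod (u - complex_of_real v) ^ 2"
      unfolding D2 power2_diff using mult_left_mono[of "cos \<phi>" 1 "2 * r * v"] rv1 cos_le_one[of \<phi>]
      by simp
    thus ?thesis by (rule power2_le_imp_le) simp
  qed
  have rvpos: "0 < r - v" using r assms by linarith
  have ratio: "r / cmod (u - complex_of_real v) \<le> 1 / (1 - v/R)"
  proof -
    have "r / cmod (u - complex_of_real v) \<le> r / (r - v)"
      proof (rule divide_left_mono)
      have "0 < cmod (u - complex_of_real v)" using dist rvpos by linarith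
      thus "0 < cmod (u - complex_of_real v) * (r - v)" using rvpos by simp
    qed (use dist r assms(2) in auto)
    also have "\<dots> \<le> 1 / (1 - v/R)"
    proof -
      have Rv: "0 < R - v" using assms by simp
      have e: "1 / (1 - v / R) = R / (R - v)" using assms by (simp add: field_simps)
      have "r * (R - v) \<le> R * (r - v)" using rv3 by (simp add: algebra_simps)
      thus ?thesis unfolding e using rvpos Rv by (simp add: divide_simps mult.commute)
    qed
    finally show ?thesis .
  qed
  have ratio0: "0 \<le> r / cmod (u - complex_of_real v)" using r assms by simp
  have B: "cmod (1 - cnj u * complex_of_real v) powr (2 * (real n + \<alpha> + 1)) = Q powr (real n + \<alpha> + 1)"
    unfolding Q_def by (subst sq_powr) simp_all
  have Ble: "Q powr (real n + \<alpha> + 1) \<le> (2 * (1 - v * R)^2) powr (real n + \<alpha> + 1)"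
    using QP Qpos assms(1) by (intro powr_mono2) auto
  have Beq: "(2 * (1 - v * R)^2) powr (real n + \<alpha> + 1)
     = 2 powr (real n + \<alpha> + 1) * ((1 - v * R) powr (real (2 * n) + \<alpha> + 1) * (1 - v * R) powr (\<alpha> + 1))"
  proof -
    have "(2 * (1 - v * R)^2) powr (real n + \<alpha> + 1) = 2 powr (real n + \<alpha> + 1) * ((1 - v * R)^2) powr (real n + \<alpha> + 1)"
      using vpos by (simp add: powr_mult)
    also have "((1 - v * R)^2) powr (real n + \<alpha> + 1) = (1 - v * R) powr (2 * (real n + \<alpha> + 1))"
      using vpos by (subst sq_powr) simp_all
    also have "\<dots> = (1 - v * R) powr (real (2 * n) + \<alpha> + 1) * (1 - v * R) powr (\<alpha> + 1)"
      using vpos by (simp add: powr_add[symmetric] algebra_simps)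
    finally show ?thesis .
  qed
  have v2: "0 < 1 - v^2" using power_strict_mono[of v 1 2] assms by simp
  have Cle: "(1 - v * R) powr (\<alpha> + 1) \<le> (1 - v^2) powr (\<alpha> + 1)"
    using vpos assms mult_left_mono[of v R v] by (intro powr_mono2) (simp_all add: power2_eq_square)
  have Cpos: "0 < (1 - v^2) powr (\<alpha> + 1)" using v2 by simp
  have Hform: "H n \<alpha> u (complex_of_real v) = (r / cmod (u - complex_of_real v)) ^ (2 * n) * Q powr (real n + \<alpha> + 1) / (1 - v^2) powr (\<alpha> + 1)"
    unfolding H_def B r_def[symmetric] by (simp add: power_divide)
  also have "\<dots> \<le> (1 / (1 - v/R)) ^ (2 * n) * (2 powr (real n + \<alpha> + 1) * ((1 - v * R) powr (real (2 * n) + \<alpha> + 1) * (1 - v * R) powr (\<alpha> + 1))) / (1 - v^2) powr (\<alpha> + 1)"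
    using Cpos ratio ratio0 Ble Beq
    by (intro divide_right_mono mult_mono power_mono) auto
  also have "\<dots> = (1 / (1 - v/R)) ^ (2 * n) * 2 powr (real n + \<alpha> + 1) * (1 - v * R) powr (real (2 * n) + \<alpha> + 1) * ((1 - v * R) powr (\<alpha> + 1) / (1 - v^2) powr (\<alpha> + 1))"
    by simp
  also have "\<dots> \<le> (1 / (1 - v/R)) ^ (2 * n) * 2 powr (real n + \<alpha> + 1) * (1 - v * R) powr (real (2 * n) + \<alpha> + 1) * 1"
    using Cle Cpos vpos assms by (intro mult_left_mono) simp_all
  also have "\<dots> = 2 powr (real n + \<alpha> + 1) * (1 - v * R) powr (real (2 * n) + \<alpha> + 1) / (1 - v / R) ^ (2 * n)"
    by (simp add: power_divide)
  finally show ?thesis .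
qed

end
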